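(* Let $S$ be a group and $L, L'$ subgroups of $S$, and let $k$ be a positive integer. Write $A^{\times k}$ for the direct product of $k$ copies of a group $A$, so that $L^{\times k}$ and $L'^{\times k}$ are subgroups of $S^{\times k}$. (1) If $(S,L,L')$ is a Gassman-Sunada triple with property FF, then $(S^{\times k},L^{\times k},L'^{\times k})$ is a Gassman-Sunada triple with property FF. (2) If $(S,L,L')$ is an EC-triple with property FF, then $(S^{\times k},L^{\times k},L'^{\times k})$ is an EC-triple with property FF.
   Context: A triple $(G,H,H')$ with $H,H'\le G$ is a Gassman-Sunada triple (almost conjugate, AC) if there is a bijection $B:H\to H'$ such that $B(h)$ is conjugate to $h$ in $G$ for every $h\in H$ (equivalently, $|g^G\cap H|=|g^G\cap H'|$ for all $g\in G$). It is an EC-triple ($H,H'$ elementwise conjugate) if every element of $H$ is conjugate in $G$ to some element of $H'$ and every element of $H'$ is conjugate in $G$ to some element of $H$. The triple has property FF if no nontrivial normal subgroup of $G$ is contained in $H$, and no nontrivial normal subgroup of $G$ is contained in $H'$ (i.e. the left-translation actions of $G$ on $G/H$ and on $G/H'$ are faithful). *)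

theory Defs
  imports "HOL-Algebra.Product_Groups"
begin

definition conjugate_in :: "('a, 'b) monoid_scheme \<Rightarrow> 'a \<Rightarrow> 'a \<Rightarrow> bool" where
  "conjugate_in G x y \<longleftrightarrow> (\<exists>g \<in> carrier G. y = g \<otimes>\<^bsub>G\<^esub> x \<otimes>\<^bsub>G\<^esub> inv\<^bsub>G\<^esub> g)"

definition gassman_sunada :: "('a, 'b) monoid_scheme \<Rightarrow> 'a set \<Rightarrow> 'a set \<Rightarrow> bool" where
  "gassman_sunada G H H' \<longleftrightarrow> subgroup H G \<and> subgroup H' G \<and>
     (\<exists>B. bij_betw B H H' \<and> (\<forall>h \<in> H. conjugate_in G h (B h)))"

definition ec_triple :: "('a, 'b) monoid_scheme \<Rightarrow> 'a set \<Rightarrow> 'a set \<Rightarrow> bool" where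
  "ec_triple G H H' \<longleftrightarrow> subgroup H G \<and> subgroup H' G \<and>
     (\<forall>h \<in> H. \<exists>h' \<in> H'. conjugate_in G h h') \<and>
     (\<forall>h' \<in> H'. \<exists>h \<in> H. conjugate_in G h' h)"

definition property_FF :: "('a, 'b) monoid_scheme \<Rightarrow> 'a set \<Rightarrow> 'a set \<Rightarrow> bool" where
  "property_FF G H H' \<longleftrightarrow>
     (\<forall>N. N \<lhd> G \<and> N \<subseteq> H \<longrightarrow> N = {\<one>\<^bsub>G\<^esub>}) \<and>
     (\<forall>N. N \<lhd> G \<and> N \<subseteq> H' \<longrightarrow> N = {\<one>\<^bsub>G\<^esub>})"

definition pow_group :: "('a, 'b) monoid_scheme \<Rightarrow> nat \<Rightarrow> (nat \<Rightarrow> 'a) monoid" where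
  "pow_group G k = product_group {..<k} (\<lambda>_. G)"

definition pow_set :: "'a set \<Rightarrow> nat \<Rightarrow> (nat \<Rightarrow> 'a) set" where
  "pow_set H k = (\<Pi>\<^sub>E i\<in>{..<k}. H)"

end

theory Submission
  imports Defs
begin

lemma pow_grp: "group S \<Longrightarrow> group (pow_group S k)"
  unfolding pow_group_def by simp

lemma pow_sub: "group S \<Longrightarrow> subgroup L S \<Longrightarrow> subgroup (pow_set L k) (pow_group S k)"
  unfolding pow_group_def pow_set_def
  by (subst PiE_subgroup_product_group) auto

lemma conj_pow:
  assumes G: "group S" and x: "x \<in> pow_set (carrier S) k" and y: "y \<in> pow_set (carrier S) k"
    and c: "\<forall>i<k. conjugate_in S (x i) (y i)"
  shows "conjugate_in (pow_group S k) x y"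
proof -
  interpret group S by (rule G)
  have "\<forall>i<k. \<exists>g \<in> carrier S. y i = g \<otimes>\<^bsub>S\<^esub> x i \<otimes>\<^bsub>S\<^esub> inv\<^bsub>S\<^esub> g"
    using c unfolding conjugate_in_def by blast
  then obtain g where g: "\<And>i. i<k \<Longrightarrow> g i \<in> carrier S \<and> y i = g i \<otimes>\<^bsub>S\<^esub> x i \<otimes>\<^bsub>S\<^esub> inv\<^bsub>S\<^esub> g i"
    by metis
  define h where "h = (\<lambda>i\<in>{..<k}. g i)"
  have h: "h \<in> carrier (pow_group S k)" using g unfolding h_def pow_group_def by auto
  have "h \<otimes>\<^bsub>pow_group S k\<^esub> x \<otimes>\<^bsub>pow_group S k\<^esub> inv\<^bsub>pow_group S k\<^esub> h = y"
  proof -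
    have "inv\<^bsub>pow_group S k\<^esub> h = (\<lambda>i\<in>{..<k}. inv\<^bsub>S\<^esub> h i)"
      using h G unfolding pow_group_def by (subst inv_product_group) auto
    then show ?thesis using y g unfolding pow_group_def pow_set_def h_def
      by (auto simp: PiE_iff fun_eq_iff extensional_def)
  qed
  then show ?thesis unfolding conjugate_in_def using h by blast
qed

lemma pow_FF:
  assumes G: "group S" and FF: "\<forall>N. N \<lhd> S \<and> N \<subseteq> L \<longrightarrow> N = {\<one>\<^bsub>S\<^esub>}"
  shows "\<forall>N. N \<lhd> pow_group S k \<and> N \<subseteq> pow_set L k \<longrightarrow> N = {\<one>\<^bsub>pow_group S k\<^esub>}"
proof (intro allI impI)
  fix N assume N: "N \<lhd> pow_group S k \<and> N \<subseteq> pow_set L k"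
  interpret S: group S by (rule G)
  interpret P: group "pow_group S k" by (rule pow_grp[OF G])
  interpret NN: normal N "pow_group S k" using N by simp
  have proj: "(\<lambda>x. x i) ` N = {\<one>\<^bsub>S\<^esub>}" if i: "i < k" for i
  proof -
    have hom: "group_hom (pow_group S k) S (\<lambda>x. x i)"
      unfolding group_hom_def group_hom_axioms_def
    proof (intro conjI)
      show "(\<lambda>x. x i) \<in> hom (pow_group S k) S"
        using i by (intro homI) (auto simp: pow_group_def)
    qed (use G pow_grp in auto)
    have surj: "(\<lambda>x. x i) ` carrier (pow_group S k) = carrier S"
    proof
      show "(\<lambda>x. x i) ` carrier (pow_group S k) \<subseteq> carrier S"
        using i by (auto simp: pow_group_def)
      show "carrier S \<subseteq> (\<lambda>x. x i) ` carrier (pow_group S k)"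
      proof
        fix s assume s: "s \<in> carrier S"
        have "(\<lambda>j\<in>{..<k}. if j = i then s else \<one>\<^bsub>S\<^esub>) \<in> carrier (pow_group S k)"
          using s by (auto simp: pow_group_def)
        moreover have "(\<lambda>j\<in>{..<k}. if j = i then s else \<one>\<^bsub>S\<^esub>) i = s" using i by simp
        ultimately show "s \<in> (\<lambda>x. x i) ` carrier (pow_group S k)" by (metis image_eqI)
      qed
    qed
    have "(\<lambda>x. x i) ` N \<lhd> S" by (rule NN.surj_hom_normal_subgroup[OF hom surj])
    moreover have "(\<lambda>x. x i) ` N \<subseteq> L" using N i by (auto simp: pow_set_def)
    ultimately show ?thesis using FF by blast
  qed
  have "N \<subseteq> {\<one>\<^bsub>pow_group S k\<^esub>}"
  proof
    fix x assume x: "x \<in> N"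
    then have xc: "x \<in> pow_set L k" using N by auto
    have "x = (\<lambda>i\<in>{..<k}. \<one>\<^bsub>S\<^esub>)"
    proof
      fix i show "x i = (\<lambda>i\<in>{..<k}. \<one>\<^bsub>S\<^esub>) i"
      proof (cases "i < k")
        case True then show ?thesis using proj[OF True] x by auto
      next
        case False then show ?thesis using xc by (auto simp: pow_set_def PiE_def extensional_def)
      qed
    qed
    then show "x \<in> {\<one>\<^bsub>pow_group S k\<^esub>}" by (simp add: pow_group_def)
  qed
  moreover have "\<one>\<^bsub>pow_group S k\<^esub> \<in> N" by (rule NN.one_closed)
  ultimately show "N = {\<one>\<^bsub>pow_group S k\<^esub>}" by (intro equalityI) (assumption, simp only: insert_subset empty_subsetI simp_thms)
qed

lemma subset_pow: "subgroup L S \<Longrightarrow> pow_set L k \<subseteq> pow_set (carrier S) k"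
  unfolding pow_set_def by (intro PiE_mono) (simp add: subgroup.subset)

lemma pmem: "x \<in> pow_set A k \<Longrightarrow> i < k \<Longrightarrow> x i \<in> A"
  unfolding pow_set_def by (erule PiE_mem) simp

lemma pI: "(\<And>i. i < k \<Longrightarrow> f i \<in> A) \<Longrightarrow> (\<lambda>i\<in>{..<k}. f i) \<in> pow_set A k"
  unfolding pow_set_def restrict_PiE_iff by simp

theorem mainTheorem1:
  fixes S :: "('a, 'b) monoid_scheme" and L L' :: "'a set" and k :: nat
  assumes "group S" and "subgroup L S" and "subgroup L' S" and "0 < k"
  shows "(gassman_sunada S L L' \<and> property_FF S L L' \<longrightarrow>
            gassman_sunada (pow_group S k) (pow_set L k) (pow_set L' k) \<and>
            property_FF (pow_group S k) (pow_set L k) (pow_set L' k))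
       \<and> (ec_triple S L L' \<and> property_FF S L L' \<longrightarrow>
            ec_triple (pow_group S k) (pow_set L k) (pow_set L' k) \<and>
            property_FF (pow_group S k) (pow_set L k) (pow_set L' k))"
proof -
  have FF: "property_FF S L L' \<Longrightarrow> property_FF (pow_group S k) (pow_set L k) (pow_set L' k)"
  proof -
    assume a: "property_FF S L L'"
    have 1: "\<forall>N. N \<lhd> S \<and> N \<subseteq> L \<longrightarrow> N = {\<one>\<^bsub>S\<^esub>}" using a unfolding property_FF_def by (rule conjunct1)
    have 2: "\<forall>N. N \<lhd> S \<and> N \<subseteq> L' \<longrightarrow> N = {\<one>\<^bsub>S\<^esub>}" using a unfolding property_FF_def by (rule conjunct2)
    show ?thesis unfolding property_FF_def using pow_FF[OF assms(1) 1] pow_FF[OF assms(1) 2] by (rule conjI)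
  qed
  have subs: "subgroup (pow_set L k) (pow_group S k)" "subgroup (pow_set L' k) (pow_group S k)"
    using pow_sub[OF assms(1,2)] pow_sub[OF assms(1,3)] by auto
  have sL: "pow_set L k \<subseteq> pow_set (carrier S) k" "pow_set L' k \<subseteq> pow_set (carrier S) k"
    using subset_pow[OF assms(2)] subset_pow[OF assms(3)] by auto
  have GS: "gassman_sunada (pow_group S k) (pow_set L k) (pow_set L' k)" if gs: "gassman_sunada S L L'"
  proof -
    obtain B where B: "bij_betw B L L'" "\<forall>h\<in>L. conjugate_in S h (B h)"
      using gs unfolding gassman_sunada_def by blast
    define B' where "B' = (\<lambda>x. \<lambda>i\<in>{..<k}. B (x i))"
    have "bij_betw B' (pow_set L k) (pow_set L' k)"
    proof (rule bij_betw_byWitness[where f' = "\<lambda>y. \<lambda>i\<in>{..<k}. inv_into L B (y i)"])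
      show "\<forall>a\<in>pow_set L k. (\<lambda>i\<in>{..<k}. inv_into L B (B' a i)) = a"
      proof
        fix a assume a: "a \<in> pow_set L k"
        show "(\<lambda>i\<in>{..<k}. inv_into L B (B' a i)) = a"
        proof
          fix i show "(\<lambda>i\<in>{..<k}. inv_into L B (B' a i)) i = a i"
          proof (cases "i < k")
            case True
            then have ai: "a i \<in> L" using a unfolding pow_set_def by (intro PiE_mem[of a]) auto
            have "B' a i = B (a i)" using True unfolding B'_def by simp
            then show ?thesis using True bij_betw_inv_into_left[OF B(1) ai] by simp
          next
            case False then show ?thesis using a by (simp add: pow_set_def PiE_def extensional_def)
          qed
        qed
      qed
      show "\<forall>a'\<in>pow_set L' k. B' (\<lambda>i\<in>{..<k}. inv_into L B (a' i)) = a'"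
      proof
        fix a assume a: "a \<in> pow_set L' k"
        show "B' (\<lambda>i\<in>{..<k}. inv_into L B (a i)) = a"
        proof
          fix i show "B' (\<lambda>i\<in>{..<k}. inv_into L B (a i)) i = a i"
          proof (cases "i < k")
            case True
            then have ai: "a i \<in> L'" using a unfolding pow_set_def by (intro PiE_mem[of a]) auto
            have "B' (\<lambda>i\<in>{..<k}. inv_into L B (a i)) i = B (inv_into L B (a i))" using True unfolding B'_def by simp
            then show ?thesis using True bij_betw_inv_into_right[OF B(1) ai] by simp
          next
            case False then show ?thesis using a by (simp add: B'_def pow_set_def PiE_def extensional_def)
          qed
        qed
      qed
      show "B' ` pow_set L k \<subseteq> pow_set L' k"
      proof
        fix y assume "y \<in> B' ` pow_set L k"
        then obtain a where a: "a \<in> pow_set L k" and y: "y = B' a" by blast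
        show "y \<in> pow_set L' k" unfolding y B'_def
          by (rule pI, rule bij_betw_apply[OF B(1)], rule pmem[OF a])
      qed
      show "(\<lambda>y. \<lambda>i\<in>{..<k}. inv_into L B (y i)) ` pow_set L' k \<subseteq> pow_set L k"
      proof
        fix y assume "y \<in> (\<lambda>y. \<lambda>i\<in>{..<k}. inv_into L B (y i)) ` pow_set L' k"
        then obtain a where a: "a \<in> pow_set L' k" and y: "y = (\<lambda>i\<in>{..<k}. inv_into L B (a i))" by blast
        show "y \<in> pow_set L k" unfolding y
          by (rule pI, rule bij_betw_apply[OF bij_betw_inv_into[OF B(1)]], rule pmem[OF a])
      qed
    qed
    moreover have "\<forall>h\<in>pow_set L k. conjugate_in (pow_group S k) h (B' h)"
    proof
      fix h assume h: "h \<in> pow_set L k"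
      have hB: "B' h \<in> pow_set L' k" unfolding B'_def
        by (rule pI, rule bij_betw_apply[OF B(1)], rule pmem[OF h])
      show "conjugate_in (pow_group S k) h (B' h)"
      proof (rule conj_pow[OF assms(1)])
        show "h \<in> pow_set (carrier S) k" using h sL(1) by blast
        show "B' h \<in> pow_set (carrier S) k" using hB sL(2) by blast
        show "\<forall>i<k. conjugate_in S (h i) (B' h i)"
          using B(2) pmem[OF h] unfolding B'_def by simp
      qed
    qed
    ultimately show ?thesis unfolding gassman_sunada_def using subs by blast
  qed
  have EC: "ec_triple (pow_group S k) (pow_set L k) (pow_set L' k)" if ec: "ec_triple S L L'"
  proof -
    have d: "\<forall>h\<in>pow_set M k. \<exists>h'\<in>pow_set M' k. conjugate_in (pow_group S k) h h'"
      if M: "subgroup M S" "subgroup M' S" and c: "\<forall>h \<in> M. \<exists>h' \<in> M'. conjugate_in S h h'" for M M'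
    proof
      fix h assume h: "h \<in> pow_set M k"
      obtain f where f: "\<And>x. x \<in> M \<Longrightarrow> f x \<in> M' \<and> conjugate_in S x (f x)" using c by metis
      define h' where "h' = (\<lambda>i\<in>{..<k}. f (h i))"
      have h': "h' \<in> pow_set M' k" unfolding h'_def
        by (rule pI) (use f pmem[OF h] in blast)
      have "conjugate_in (pow_group S k) h h'"
      proof (rule conj_pow[OF assms(1)])
        show "h \<in> pow_set (carrier S) k" using h subset_pow[OF M(1)] by blast
        show "h' \<in> pow_set (carrier S) k" using h' subset_pow[OF M(2)] by blast
        show "\<forall>i<k. conjugate_in S (h i) (h' i)"
          using f pmem[OF h] unfolding h'_def by simp
      qed
      then show "\<exists>h'\<in>pow_set M' k. conjugate_in (pow_group S k) h h'" using h' by blast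
    qed
    show ?thesis unfolding ec_triple_def
      using subs d[OF assms(2,3)] d[OF assms(3,2)] ec unfolding ec_triple_def by blast
  qed
  show ?thesis using FF GS EC by blast
qed

end
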